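(* Let $G$ be a simple graph with $m \ge 4$ edges, and let $\Delta_1 \ge \dots \ge \Delta_m$ and $\psi_1,\dots,\psi_m$ be as defined below. Then for no $k$ with $4 \le k \le m$ does $G$ satisfy both $q(G) < \min\{\psi_i : 1 \le i \le k-1\}$ and $q(G) = \psi_k$.
   Context: $q(G)$ denotes the largest eigenvalue of the signless Laplacian $D + A$ of $G$. For each edge $uv$ of $G$ put $d_u + d_v - 2$, and let $\Delta_1 \ge \dots \ge \Delta_m$ be these numbers in non-increasing order. For $1 \le k \le m$, \[ \psi_k := 1 + \frac{\Delta_k + 1 + \sqrt{(\Delta_k+1)^2 + 4\sum_{i=1}^{k-1}(\Delta_i - \Delta_k)}}{2}. \] It holds that $q(G) \le \psi_k$ for all $k$, with equality iff $\Delta_1 = \Delta_m$ or there exists $2 \le t \le k$ with $m-1 = \Delta_1 = \Delta_{t-1} > \Delta_t = \Delta_m$. *)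

theory Defs
  imports "HOL-Analysis.Analysis" "HOL-Library.Multiset"
begin

definition simple_graph :: "('n::finite \<Rightarrow> 'n \<Rightarrow> bool) \<Rightarrow> bool" where
  "simple_graph E \<longleftrightarrow> (\<forall>u v. E u v \<longrightarrow> E v u) \<and> (\<forall>u. \<not> E u u)"

definition edges :: "('n::finite \<Rightarrow> 'n \<Rightarrow> bool) \<Rightarrow> 'n set set" where
  "edges E = {{u, v} | u v. E u v}"

definition num_edges :: "('n::finite \<Rightarrow> 'n \<Rightarrow> bool) \<Rightarrow> nat" where
  "num_edges E = card (edges E)"

definition degree :: "('n::finite \<Rightarrow> 'n \<Rightarrow> bool) \<Rightarrow> 'n \<Rightarrow> nat" where
  "degree E u = card {v. E u v}"

definition signless_laplacian :: "('n::finite \<Rightarrow> 'n \<Rightarrow> bool) \<Rightarrow> real^'n^'n" where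
  "signless_laplacian E = (\<chi> i j. (if i = j then real (degree E i) else 0)
                                  + (if E i j then 1 else 0))"

text \<open>q(G): the largest eigenvalue of the signless Laplacian (a real symmetric matrix,
so all eigenvalues are real).\<close>
definition q_index :: "('n::finite \<Rightarrow> 'n \<Rightarrow> bool) \<Rightarrow> real" where
  "q_index E = Max {c. \<exists>x. x \<noteq> 0 \<and> signless_laplacian E *v x = c *\<^sub>R x}"

definition edge_val :: "('n::finite \<Rightarrow> 'n \<Rightarrow> bool) \<Rightarrow> 'n set \<Rightarrow> int" where
  "edge_val E e = (\<Sum>u\<in>e. int (degree E u)) - 2"

text \<open>The list \<Delta>_1 \<ge> ... \<ge> \<Delta>_m (stored 0-based).\<close>
definition Deltas :: "('n::finite \<Rightarrow> 'n \<Rightarrow> bool) \<Rightarrow> int list" where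
  "Deltas E = rev (sorted_list_of_multiset (image_mset (edge_val E) (mset_set (edges E))))"

definition Delta :: "('n::finite \<Rightarrow> 'n \<Rightarrow> bool) \<Rightarrow> nat \<Rightarrow> real" where
  "Delta E i = real_of_int (Deltas E ! (i - 1))"

definition psi :: "('n::finite \<Rightarrow> 'n \<Rightarrow> bool) \<Rightarrow> nat \<Rightarrow> real" where
  "psi E k = 1 + (Delta E k + 1
     + sqrt ((Delta E k + 1)^2 + 4 * (\<Sum>i=1..k-1. Delta E i - Delta E k))) / 2"

end

theory Submission
  imports Defs
begin


lemma sym_inner:
  fixes A :: "real^'n^'n"
  assumes "\<And>i j. A$i$j = A$j$i"
  shows "inner (A *v x) y = inner x (A *v y)"
proof -
  have "inner (A *v x) y = (\<Sum>i\<in>UNIV. \<Sum>j\<in>UNIV. A$i$j * x$j * y$i)"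
    by (simp add: inner_vec_def matrix_vector_mult_def sum_distrib_right)
  also have "\<dots> = (\<Sum>j\<in>UNIV. \<Sum>i\<in>UNIV. A$i$j * x$j * y$i)" by (rule sum.swap)
  also have "\<dots> = inner x (A *v y)"
    by (simp add: inner_vec_def matrix_vector_mult_def sum_distrib_left assms mult.commute mult.left_commute)
  finally show ?thesis .
qed

lemma eig_finite:
  fixes A :: "real^'n^'n"
  assumes "\<And>i j. A$i$j = A$j$i"
  shows "finite {c. \<exists>x. x \<noteq> 0 \<and> A *v x = c *\<^sub>R x}"
proof -
  define S where "S = {c. \<exists>x. x \<noteq> 0 \<and> A *v x = c *\<^sub>R x}"
  define v where "v c = (SOME x. x \<noteq> 0 \<and> A *v x = c *\<^sub>R x)" for c
  have v: "v c \<noteq> 0 \<and> A *v v c = c *\<^sub>R v c" if "c \<in> S" for c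
    using that unfolding S_def v_def by (metis (mono_tags, lifting) mem_Collect_eq someI_ex)
  have inj: "inj_on v S"
  proof (rule inj_onI)
    fix c d assume "c \<in> S" "d \<in> S" "v c = v d"
    then have "c *\<^sub>R v c = d *\<^sub>R v c" "v c \<noteq> 0" using v by metis+
    then show "c = d" by (simp add: scaleR_cancel_right)
  qed
  have orth: "pairwise orthogonal (v ` S)"
  proof (clarsimp simp: pairwise_def)
    fix c d assume cd: "c \<in> S" "d \<in> S" "v c \<noteq> v d"
    then have "c \<noteq> d" by auto
    have "c * inner (v c) (v d) = inner (A *v v c) (v d)" using v[OF cd(1)] by simp
    also have "\<dots> = inner (v c) (A *v v d)" by (rule sym_inner[OF assms])
    also have "\<dots> = d * inner (v c) (v d)" using v[OF cd(2)] by simp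
    finally have "inner (v c) (v d) = 0" using \<open>c \<noteq> d\<close> by auto
    then show "orthogonal (v c) (v d)" by (simp add: orthogonal_def)
  qed
  have "0 \<notin> v ` S" using v by auto
  then have "independent (v ` S)" using pairwise_orthogonal_independent orth by blast
  then have "finite (v ` S)" using independent_bound by blast
  then show ?thesis using inj finite_imageD unfolding S_def by blast
qed

lemma eig_exists:
  fixes A :: "real^'n^'n"
  assumes "\<And>i j. A$i$j = A$j$i"
  shows "\<exists>c x. x \<noteq> 0 \<and> A *v x = c *\<^sub>R x"
proof -
  define f where "f x = inner x (A *v x)" for x :: "real^'n"
  have cont: "continuous_on (sphere 0 1) f"
    unfolding f_def by (intro continuous_intros linear_continuous_on matrix_vector_mul_linear_gen)
  obtain i :: 'n where True by auto
  have ne: "sphere (0::real^'n) 1 \<noteq> {}"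
    by (metis norm_axis_1 mem_sphere_0 empty_iff)
  obtain x0 where x0: "x0 \<in> sphere 0 1" and mx: "\<And>y. y \<in> sphere 0 1 \<Longrightarrow> f y \<le> f x0"
    using continuous_attains_sup[OF compact_sphere ne cont] by blast
  define l where "l = f x0"
  have n1: "norm x0 = 1" using x0 by simp
  have hom: "f (c *\<^sub>R y) = c^2 * f y" for c y
    unfolding f_def by (simp add: matrix_vector_mult_scaleR power2_eq_square)
  have le: "f y \<le> l * (norm y)^2" for y
  proof (cases "y = 0")
    case True then show ?thesis by (simp add: f_def)
  next
    case False
    then have "(1/norm y) *\<^sub>R y \<in> sphere 0 1" by simp
    then have "f ((1/norm y) *\<^sub>R y) \<le> l" using mx l_def by blast
    then have "(1/norm y)^2 * f y \<le> l" by (simp add: hom)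
    then show ?thesis using False by (simp add: field_simps power2_eq_square)
  qed
  define y where "y = A *v x0 - l *\<^sub>R x0"
  have "y = 0"
  proof (rule ccontr)
    assume "y \<noteq> 0"
    then have ny: "inner y y > 0" by simp
    have "f x0 = l" by (simp add: l_def)
    have ix: "inner x0 x0 = 1" using n1 by (simp add: dot_square_norm)
    have key: "2 * t * inner y y + t^2 * (f y - l * inner y y) \<le> 0" for t
    proof -
      have "f (x0 + t *\<^sub>R y) \<le> l * (norm (x0 + t *\<^sub>R y))^2" by (rule le)
      moreover have "f (x0 + t *\<^sub>R y) = f x0 + 2 * t * inner y (A *v x0) + t^2 * f y"
        unfolding f_def using sym_inner[OF assms, of x0 y]
        by (simp add: matrix_vector_right_distrib matrix_vector_mult_scaleR inner_add_left inner_add_right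
            power2_eq_square algebra_simps inner_commute)
      moreover have "(norm (x0 + t *\<^sub>R y))^2 = 1 + 2 * t * inner x0 y + t^2 * inner y y"
        unfolding power2_norm_eq_inner by (simp add: inner_add_left inner_add_right ix power2_eq_square algebra_simps inner_commute)
      moreover have "inner y (A *v x0) - l * inner x0 y = inner y y"
        unfolding y_def by (simp add: inner_diff_left inner_diff_right inner_commute algebra_simps)
      ultimately show ?thesis using \<open>f x0 = l\<close> by (simp add: algebra_simps power2_eq_square)
    qed
    define c where "c = \<bar>f y - l * inner y y\<bar> + 1"
    have c: "c > 0" "- c \<le> f y - l * inner y y" unfolding c_def by auto
    define t where "t = inner y y / c"
    have t: "t > 0" using ny c by (simp add: t_def)
    have "t^2 * (- c) \<le> t^2 * (f y - l * inner y y)" using c by (intro mult_left_mono) auto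
    moreover have "t^2 * (- c) = - (t * inner y y)" using c by (simp add: t_def power2_eq_square)
    ultimately have "2 * t * inner y y + t^2 * (f y - l * inner y y) \<ge> t * inner y y" by linarith
    moreover have "t * inner y y > 0" using t ny by simp
    ultimately show False using key[of t] by linarith
  qed
  then have "A *v x0 = l *\<^sub>R x0" by (simp add: y_def)
  moreover have "x0 \<noteq> 0" using n1 by auto
  ultimately show ?thesis by blast
qed




definition nbrs :: "('n::finite \<Rightarrow> 'n \<Rightarrow> bool) \<Rightarrow> 'n set \<Rightarrow> 'n set set" where
  "nbrs E e = {f \<in> edges E. f \<noteq> e \<and> f \<inter> e \<noteq> {}}"

definition zv :: "real^'n \<Rightarrow> 'n set \<Rightarrow> real" where
  "zv x f = (\<Sum>w\<in>f. x$w)"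

context
  fixes E :: "'n::finite \<Rightarrow> 'n \<Rightarrow> bool"
  assumes sg: "simple_graph E"
begin

lemma Esym: "E u v \<Longrightarrow> E v u" using sg by (simp add: simple_graph_def)
lemma Esym_iff: "E u v \<longleftrightarrow> E v u" using Esym by blast
lemma Eirr: "\<not> E u u" using sg by (simp add: simple_graph_def)
lemma Ene: "E u v \<Longrightarrow> u \<noteq> v" using Eirr by auto

lemma edges_iff: "e \<in> edges E \<longleftrightarrow> (\<exists>u v. E u v \<and> e = {u,v})"
  by (auto simp: edges_def)

lemma fin_edges: "finite (edges E)" by simp

lemma ev_pair: "E u v \<Longrightarrow> edge_val E {u,v} = int (degree E u) + int (degree E v) - 2"
  using Ene by (simp add: edge_val_def)

lemma deg_pos: "E u v \<Longrightarrow> degree E u \<ge> 1"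
proof -
  assume "E u v" hence "Collect (E u) \<noteq> {}" by auto
  hence "0 < card (Collect (E u))" by (simp add: card_gt_0_iff)
  thus ?thesis unfolding degree_def by simp
qed

lemma ev_nonneg: "e \<in> edges E \<Longrightarrow> edge_val E e \<ge> 0"
proof -
  assume "e \<in> edges E"
  then obtain u v where "E u v" "e = {u,v}" using edges_iff by blast
  moreover have "degree E u \<ge> 1" "degree E v \<ge> 1" using deg_pos \<open>E u v\<close> Esym by blast+
  ultimately show ?thesis using ev_pair by simp
qed

lemma star_eq: "{f \<in> edges E. u \<in> f} = (\<lambda>w. {u,w}) ` {w. E u w}"
proof (intro equalityI subsetI)
  fix f assume "f \<in> {f \<in> edges E. u \<in> f}"
  then obtain a b where ab: "E a b" "f = {a,b}" "u \<in> f" by (auto simp: edges_def)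
  show "f \<in> (\<lambda>w. {u,w}) ` {w. E u w}"
  proof (cases "u = a")
    case True then show ?thesis using ab by auto
  next
    case False then have "u = b" using ab by auto
    then show ?thesis using ab Esym[OF ab(1)] by (auto simp: insert_commute)
  qed
next
  fix f assume "f \<in> (\<lambda>w. {u,w}) ` {w. E u w}"
  then show "f \<in> {f \<in> edges E. u \<in> f}" by (auto simp: edges_def)
qed

lemma star_inj: "inj_on (\<lambda>w. {u,w}) {w. E u w}"
  by (rule inj_onI) (auto simp: doubleton_eq_iff dest: Ene)

lemma card_star: "card {f \<in> edges E. u \<in> f} = degree E u"
  unfolding star_eq degree_def by (rule card_image[OF star_inj])

lemma nbrs_split:
  assumes "E u v"
  shows "nbrs E {u,v} = ({f \<in> edges E. u \<in> f} - {{u,v}}) \<union> ({f \<in> edges E. v \<in> f} - {{u,v}})"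
    and "({f \<in> edges E. u \<in> f} - {{u,v}}) \<inter> ({f \<in> edges E. v \<in> f} - {{u,v}}) = {}"
proof -
  show "nbrs E {u,v} = ({f \<in> edges E. u \<in> f} - {{u,v}}) \<union> ({f \<in> edges E. v \<in> f} - {{u,v}})"
    by (auto simp: nbrs_def)
  show "({f \<in> edges E. u \<in> f} - {{u,v}}) \<inter> ({f \<in> edges E. v \<in> f} - {{u,v}}) = {}"
    using assms by (auto simp: edges_def doubleton_eq_iff dest: Ene)
qed

lemma card_nbrs:
  assumes "E u v"
  shows "int (card (nbrs E {u,v})) = edge_val E {u,v}"
proof -
  have inu: "{u,v} \<in> {f \<in> edges E. u \<in> f}" and inv: "{u,v} \<in> {f \<in> edges E. v \<in> f}"
    using assms by (auto simp: edges_def)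
  have "card (nbrs E {u,v}) = card ({f \<in> edges E. u \<in> f} - {{u,v}}) + card ({f \<in> edges E. v \<in> f} - {{u,v}})"
    unfolding nbrs_split(1)[OF assms] by (rule card_Un_disjoint) (use nbrs_split(2)[OF assms] in auto)
  also have "\<dots> = (degree E u - 1) + (degree E v - 1)"
    using inu inv by (simp add: card_star)
  finally show ?thesis using ev_pair[OF assms] deg_pos[OF assms] deg_pos[OF Esym[OF assms]] by simp
qed

lemma Q_sym: "signless_laplacian E $ i $ j = signless_laplacian E $ j $ i"
  unfolding signless_laplacian_def vec_lambda_beta using Esym_iff[of i j] by (cases "i = j") auto

lemma Q_row: "(signless_laplacian E *v x) $ u = (\<Sum>f\<in>{f \<in> edges E. u \<in> f}. zv x f)"
proof -
  have "(signless_laplacian E *v x) $ u = (\<Sum>j\<in>UNIV. signless_laplacian E $ u $ j * x$j)"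
    by (simp add: matrix_vector_mult_def)
  also have "\<dots> = (\<Sum>j\<in>UNIV. (if u = j then real (degree E u) * x$j else 0) + (if E u j then x$j else 0))"
  proof (rule sum.cong[OF refl])
    fix j show "signless_laplacian E $ u $ j * x$j = (if u = j then real (degree E u) * x$j else 0) + (if E u j then x$j else 0)"
      unfolding signless_laplacian_def vec_lambda_beta by (cases "u = j"; cases "E u j") (simp_all add: distrib_right)
  qed
  also have "\<dots> = (\<Sum>j\<in>UNIV. (if u = j then real (degree E u) * x$j else 0)) + (\<Sum>j\<in>UNIV. (if E u j then x$j else 0))"
    by (rule sum.distrib)
  also have "(\<Sum>j\<in>UNIV. (if u = j then real (degree E u) * x$j else 0)) = real (degree E u) * x$u"
    by (simp add: sum.delta)
  also have "(\<Sum>j\<in>UNIV. (if E u j then x$j else 0)) = (\<Sum>w\<in>{w. E u w}. x$w)"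
    using sum.inter_filter[of UNIV "\<lambda>j. x$j" "E u"] by simp
  also have "real (degree E u) * x$u + (\<Sum>w\<in>{w. E u w}. x$w) = (\<Sum>w\<in>{w. E u w}. x$u + x$w)"
    by (simp add: sum.distrib degree_def)
  also have "\<dots> = (\<Sum>w\<in>{w. E u w}. zv x {u,w})"
    by (rule sum.cong) (auto simp: zv_def dest: Ene)
  also have "\<dots> = (\<Sum>f\<in>{f \<in> edges E. u \<in> f}. zv x f)"
    unfolding star_eq by (rule sum.reindex[OF star_inj, symmetric, unfolded comp_def])
  finally show ?thesis .
qed

lemma edge_eig:
  assumes "signless_laplacian E *v x = q *\<^sub>R x" and "E u v"
  shows "(\<Sum>f\<in>nbrs E {u,v}. zv x f) = (q - 2) * zv x {u,v}"
proof -
  have inu: "{u,v} \<in> {f \<in> edges E. u \<in> f}" and inv: "{u,v} \<in> {f \<in> edges E. v \<in> f}"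
    using assms by (auto simp: edges_def)
  have su: "(\<Sum>f\<in>{f \<in> edges E. u \<in> f} - {{u,v}}. zv x f) = q * x$u - zv x {u,v}"
    using Q_row[of x u] assms(1) inu by (simp add: sum_diff1)
  have sv: "(\<Sum>f\<in>{f \<in> edges E. v \<in> f} - {{u,v}}. zv x f) = q * x$v - zv x {u,v}"
    using Q_row[of x v] assms(1) inv by (simp add: sum_diff1)
  have "(\<Sum>f\<in>nbrs E {u,v}. zv x f) = (\<Sum>f\<in>{f \<in> edges E. u \<in> f} - {{u,v}}. zv x f) + (\<Sum>f\<in>{f \<in> edges E. v \<in> f} - {{u,v}}. zv x f)"
    unfolding nbrs_split(1)[OF assms(2)] by (rule sum.union_disjoint) (use nbrs_split(2)[OF assms(2)] in auto)
  also have "\<dots> = (q - 2) * zv x {u,v}"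
    using su sv Ene[OF assms(2)] by (simp add: zv_def algebra_simps)
  finally show ?thesis .
qed

lemma z_nonzero:
  assumes "signless_laplacian E *v x = q *\<^sub>R x" "x \<noteq> 0" "q \<noteq> 0"
  shows "\<exists>e\<in>edges E. zv x e \<noteq> 0"
proof (rule ccontr)
  assume "\<not> ?thesis"
  then have "\<And>u. (signless_laplacian E *v x) $ u = 0" by (simp add: Q_row)
  then have "\<And>u. q * x$u = 0" using assms(1) by (metis vector_scaleR_component real_scaleR_def)
  then have "x = 0" using assms(3) by (simp add: vec_eq_iff)
  then show False using assms(2) by simp
qed

end



lemma sum_subset_eq:
  fixes g :: "'a \<Rightarrow> real"
  assumes "finite B" "A \<subseteq> B" "\<And>b. b \<in> B \<Longrightarrow> g b > 0" "sum g A = sum g B"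
  shows "A = B"
proof (rule ccontr)
  assume "A \<noteq> B"
  then have ne: "B - A \<noteq> {}" using assms(2) by auto
  have "sum g B = sum g A + sum g (B - A)"
    using assms(1,2) by (metis add.commute sum.subset_diff)
  moreover have "sum g (B - A) > 0"
    using ne assms(1,3) by (intro sum_pos) auto
  ultimately show False using assms(4) by simp
qed

lemma four_common:
  assumes "e1 = {a1,b1}" "e2 = {a2,b2}" "e3 = {a3,b3}" "g = {a4,b4}"
    and "e1 \<noteq> e2" "e1 \<noteq> e3" "e2 \<noteq> e3" "g \<noteq> e1" "g \<noteq> e2" "g \<noteq> e3"
    and "e1 \<inter> e2 \<noteq> {}" "e1 \<inter> e3 \<noteq> {}" "e2 \<inter> e3 \<noteq> {}"
    and "g \<inter> e1 \<noteq> {}" "g \<inter> e2 \<noteq> {}" "g \<inter> e3 \<noteq> {}"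
    and n1: "a1 \<noteq> b1" and n4: "a4 \<noteq> b4"
  shows "\<exists>c. c \<in> e1 \<and> c \<in> e2 \<and> c \<in> e3 \<and> c \<in> g"
proof -
  obtain c where c: "c \<in> e1" "c \<in> g" using assms(14) by blast
  obtain a where a: "e1 = {c,a}" using c(1) assms(1) by (metis insert_commute insertE singletonD)
  obtain b where b: "g = {c,b}" using c(2) assms(4) by (metis insert_commute insertE singletonD)
  have ab: "a \<noteq> b" using a b assms(8) by auto
  have ca: "c \<noteq> a" using a assms(1) n1 by (metis insert_absorb2 doubleton_eq_iff)
  have cb: "c \<noteq> b" using b assms(4) n4 by (metis insert_absorb2 doubleton_eq_iff)
  have two: "\<And>e x y. e = {x,y} \<Longrightarrow> c \<notin> e \<Longrightarrow> e \<inter> {c,a} \<noteq> {} \<Longrightarrow> e \<inter> {c,b} \<noteq> {} \<Longrightarrow> e = {a,b}"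
    using ab by auto
  show ?thesis
  proof (cases "c \<in> e2 \<and> c \<in> e3")
    case True then show ?thesis using c by blast
  next
    case False
    show ?thesis
    proof (cases "c \<in> e2")
      case True
      then have "c \<notin> e3" using False by blast
      then have e3: "e3 = {a,b}" using two[OF assms(3)] assms(12,16) a b by (auto simp: Int_commute)
      obtain d where d: "e2 = {c,d}" using True assms(2) by (metis insert_commute insertE singletonD)
      have "e2 \<inter> e3 \<noteq> {}" by fact
      then have "d = a \<or> d = b" using d e3 ca cb by auto
      then show ?thesis using d a b assms(5,9) by auto
    next
      case False
      then have e2: "e2 = {a,b}" using two[OF assms(2)] assms(11,15) a b by (auto simp: Int_commute)
      show ?thesis
      proof (cases "c \<in> e3")
        case False
        then have "e3 = {a,b}" using two[OF assms(3)] assms(12,16) a b by (auto simp: Int_commute)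
        then show ?thesis using e2 assms(7) by simp
      next
        case True
        obtain d where d: "e3 = {c,d}" using True assms(3) by (metis insert_commute insertE singletonD)
        have "e2 \<inter> e3 \<noteq> {}" by fact
        then have "d = a \<or> d = b" using d e2 ca cb by auto
        then show ?thesis using d a b assms(6,10) by auto
      qed
    qed
  qed
qed

lemma edge_at:
  assumes sg: "simple_graph E" and "e \<in> edges E" "c \<in> e"
  obtains a where "e = {c,a}" "E c a"
proof -
  obtain u v where uv: "E u v" "e = {u,v}" using assms edges_iff[OF sg] by blast
  show ?thesis
  proof (cases "c = u")
    case True then show ?thesis using that uv by blast
  next
    case False then have "c = v" using uv assms(3) by auto
    then show ?thesis using that[of u] uv Esym[OF sg] by (auto simp: insert_commute)
  qed
qed

lemma comb:
  assumes sg: "simple_graph E" and K: "K \<subseteq> edges E" "card K \<ge> 3"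
    and g: "g \<in> edges E" "g \<notin> K" "K \<subseteq> nbrs E g"
    and pw: "\<And>j. j \<in> K \<Longrightarrow> K - {j} \<subseteq> nbrs E j"
    and cl: "\<And>h j. h \<in> edges E \<Longrightarrow> h \<notin> K \<Longrightarrow> j \<in> K \<Longrightarrow> h \<in> nbrs E j \<Longrightarrow> K \<subseteq> nbrs E h"
  shows "\<exists>j\<in>K. edge_val E j \<le> edge_val E g"
proof -
  obtain T where T: "T \<subseteq> K" "card T = 3" using obtain_subset_with_card_n[OF K(2)] by blast
  obtain e1 e2 e3 where T3: "T = {e1,e2,e3}" "e1 \<noteq> e2" "e2 \<noteq> e3" "e1 \<noteq> e3"
    using T(2) card_3_iff by metis
  have inK: "e1 \<in> K" "e2 \<in> K" "e3 \<in> K" using T T3 by auto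
  have inE: "e1 \<in> edges E" "e2 \<in> edges E" "e3 \<in> edges E" using inK K by auto
  have nb: "\<And>f e. f \<in> nbrs E e \<longleftrightarrow> f \<in> edges E \<and> f \<noteq> e \<and> f \<inter> e \<noteq> {}" by (simp add: nbrs_def)
  have n12: "e2 \<in> nbrs E e1" using pw[OF inK(1)] inK(2) T3(2) by blast
  have n13: "e3 \<in> nbrs E e1" using pw[OF inK(1)] inK(3) T3(4) by blast
  have n23: "e3 \<in> nbrs E e2" using pw[OF inK(2)] inK(3) T3(3) by blast
  have m12: "e1 \<inter> e2 \<noteq> {}" "e1 \<inter> e3 \<noteq> {}" "e2 \<inter> e3 \<noteq> {}"
    using n12 n13 n23 unfolding nbrs_def by blast+
  have g1: "e1 \<in> nbrs E g" "e2 \<in> nbrs E g" "e3 \<in> nbrs E g" using g(3) inK by blast+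
  have mg: "g \<inter> e1 \<noteq> {}" "g \<inter> e2 \<noteq> {}" "g \<inter> e3 \<noteq> {}" "g \<noteq> e1" "g \<noteq> e2" "g \<noteq> e3"
    using g1 unfolding nbrs_def by blast+
  obtain u1 v1 where 1: "E u1 v1" "e1 = {u1,v1}" using inE(1) edges_iff[OF sg] by blast
  obtain u2 v2 where 2: "E u2 v2" "e2 = {u2,v2}" using inE(2) edges_iff[OF sg] by blast
  obtain u3 v3 where 3: "E u3 v3" "e3 = {u3,v3}" using inE(3) edges_iff[OF sg] by blast
  obtain u4 v4 where 4: "E u4 v4" "g = {u4,v4}" using g(1) edges_iff[OF sg] by blast
  obtain c where c: "c \<in> e1" "c \<in> e2" "c \<in> e3" "c \<in> g"
    using four_common[OF 1(2) 2(2) 3(2) 4(2) T3(2) T3(4) T3(3) mg(4-6) m12 mg(1-3)]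
      Ene[OF sg 1(1)] Ene[OF sg 4(1)] by blast
  obtain a1 where a1: "e1 = {c,a1}" "E c a1" using edge_at[OF sg inE(1) c(1)] by blast
  obtain a2 where a2: "e2 = {c,a2}" "E c a2" using edge_at[OF sg inE(2) c(2)] by blast
  obtain a3 where a3: "e3 = {c,a3}" "E c a3" using edge_at[OF sg inE(3) c(3)] by blast
  obtain b where b: "g = {c,b}" "E c b" using edge_at[OF sg g(1) c(4)] by blast
  have ca: "c \<noteq> a1" "c \<noteq> a2" "c \<noteq> a3" using a1 a2 a3 Ene[OF sg] by auto
  have a12: "a1 \<noteq> a2" "a1 \<noteq> a3" "a2 \<noteq> a3" using a1 a2 a3 T3 by auto
  have meet: "h \<inter> e \<noteq> {}" if h: "h \<in> nbrs E e1" and e: "e \<in> K" for h e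
  proof (cases "h \<in> K")
    case True
    show ?thesis
    proof (cases "h = e")
      case True then show ?thesis using h by (auto simp: nb)
    next
      case False then show ?thesis using pw[OF e] \<open>h \<in> K\<close> by (auto simp: nb)
    qed
  next
    case False
    then have "K \<subseteq> nbrs E h" using cl[of h e1] h inK(1) by (auto simp: nb)
    then show ?thesis using e unfolding nbrs_def by blast
  qed
  have deg1: "{w. E a1 w} = {c}"
  proof (intro equalityI subsetI)
    fix w assume "w \<in> {w. E a1 w}"
    then have w: "E a1 w" by simp
    show "w \<in> {c}"
    proof (rule ccontr)
      assume "w \<notin> {c}"
      then have wc: "w \<noteq> c" by simp
      have hE: "{a1,w} \<in> edges E" using w by (auto simp: edges_def)
      have "{a1,w} \<in> nbrs E e1" using hE a1 wc ca by (auto simp: nb doubleton_eq_iff)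
      then have "{a1,w} \<inter> e2 \<noteq> {}" "{a1,w} \<inter> e3 \<noteq> {}" using meet inK by auto
      then have "a2 = w" "a3 = w" using a2 a3 wc ca a12 by auto
      then show False using a12 by simp
    qed
  next
    fix w assume "w \<in> {c}" then show "w \<in> {w. E a1 w}" using a1 Esym[OF sg] by auto
  qed
  have "edge_val E e1 = int (degree E c) + 1 - 2"
    using a1 ev_pair[OF sg] deg1 by (simp add: degree_def)
  moreover have "edge_val E g = int (degree E c) + int (degree E b) - 2"
    using b ev_pair[OF sg] by simp
  moreover have "degree E b \<ge> 1" using deg_pos[OF sg Esym[OF sg b(2)]] .
  ultimately show ?thesis using inK(1) by (intro bexI[of _ e1]) auto
qed




lemma deltas_list:
  fixes E :: "'n::finite \<Rightarrow> 'n \<Rightarrow> bool"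
  obtains es where "distinct es" "set es = edges E"
    "\<And>i j. i \<le> j \<Longrightarrow> j < length es \<Longrightarrow> edge_val E (es!j) \<le> edge_val E (es!i)"
    "Deltas E = map (edge_val E) es"
proof -
  obtain l where l: "distinct l" "set l = edges E"
    using finite_distinct_list[of "edges E"] by auto
  define s where "s = sort_key (edge_val E) l"
  define es where "es = rev s"
  have ms: "mset_set (edges E) = mset l" using l by (metis mset_set_set)
  have srt: "sort (map (edge_val E) l) = map (edge_val E) s"
    unfolding s_def by (rule properties_for_sort) (simp_all add: mset_map)
  have D: "Deltas E = map (edge_val E) es"
  proof -
    have "image_mset (edge_val E) (mset l) = mset (map (edge_val E) l)" by simp
    then show ?thesis unfolding Deltas_def ms es_def
      by (simp only: sorted_list_of_multiset_mset srt rev_map)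
  qed
  have sw: "sorted_wrt (\<lambda>x y. y \<le> x) (map (edge_val E) es)"
  proof -
    have "sorted (map (edge_val E) s)" by (simp add: s_def)
    then show ?thesis unfolding es_def by (simp add: rev_map[symmetric] sorted_wrt_rev)
  qed
  have mono: "edge_val E (es!j) \<le> edge_val E (es!i)" if "i \<le> j" "j < length es" for i j
  proof (cases "i = j")
    case True then show ?thesis by simp
  next
    case False
    then have "i < j" using that by simp
    then show ?thesis using sorted_wrt_nth_less[OF sw, of i j] that by simp
  qed
  show ?thesis
    by (rule that[of es]) (use l mono D in \<open>auto simp: es_def s_def\<close>)
qed

lemma card_nbrs':
  assumes sg: "simple_graph E" and "e \<in> edges E"
  shows "real (card (nbrs E e)) = real_of_int (edge_val E e)"
proof -
  obtain u v where "E u v" "e = {u,v}" using assms edges_iff[OF sg] by blast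
  then show ?thesis using card_nbrs[OF sg] by (metis of_int_of_nat_eq)
qed

lemma fin_nbrs: "finite (nbrs E e)" by (simp add: nbrs_def)

theorem mainTheorem3:
  fixes E :: "'n::finite \<Rightarrow> 'n \<Rightarrow> bool"
  assumes "simple_graph E"
    and "num_edges E \<ge> 4"
    and "4 \<le> k" and "k \<le> num_edges E"
  shows "\<not> (q_index E < Min {psi E i | i. 1 \<le> i \<and> i \<le> k - 1} \<and> q_index E = psi E k)"
proof
  assume H: "q_index E < Min {psi E i | i. 1 \<le> i \<and> i \<le> k - 1} \<and> q_index E = psi E k"
  note sg = assms(1)
  define m where "m = num_edges E"
  obtain es where es: "distinct es" "set es = edges E"
    "\<And>i j. i \<le> j \<Longrightarrow> j < length es \<Longrightarrow> edge_val E (es!j) \<le> edge_val E (es!i)"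
    "Deltas E = map (edge_val E) es" using deltas_list[of E] by blast
  have len: "length es = m" using es(1,2) distinct_card unfolding m_def num_edges_def by metis
  define D where "D f = real_of_int (edge_val E f)" for f
  have Dnn: "\<And>f. f \<in> edges E \<Longrightarrow> D f \<ge> 0" using ev_nonneg[OF sg] by (simp add: D_def)
  have km: "k \<le> m" "4 \<le> k" using assms unfolding m_def by auto
  have Dl: "\<And>i. 1 \<le> i \<Longrightarrow> i \<le> m \<Longrightarrow> Delta E i = D (es!(i-1))"
    by (simp add: Delta_def es(4) len D_def)
  have mono: "\<And>i j. i \<le> j \<Longrightarrow> j < m \<Longrightarrow> D (es!j) \<le> D (es!i)"
    using es(3) len by (simp add: D_def)
  define Dk where "Dk = D (es!(k-1))"
  define K where "K = set (take (k-1) es)"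
  have Ksub: "K \<subseteq> edges E" using es(2) set_take_subset unfolding K_def by metis
  have cardK: "card K = k - 1" using distinct_card[of "take (k-1) es"] es(1) len km by (simp add: K_def)
  have Kmem: "f \<in> K \<longleftrightarrow> (\<exists>i<k-1. f = es!i)" for f
    unfolding K_def using len km by (auto simp: in_set_conv_nth)
  have esin: "\<And>i. i < m \<Longrightarrow> es!i \<in> edges E" using es(2) len by auto
  have notK: "\<And>f. f \<in> edges E \<Longrightarrow> f \<notin> K \<Longrightarrow> D f \<le> Dk"
  proof -
    fix f assume f: "f \<in> edges E" "f \<notin> K"
    then obtain j where j: "j < m" "f = es!j" using es(2) len by (metis in_set_conv_nth)
    then have "\<not> j < k - 1" using f(2) Kmem by blast
    then show "D f \<le> Dk" unfolding Dk_def using mono[of "k-1" j] j by simp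
  qed
  have Kge: "\<And>f. f \<in> K \<Longrightarrow> D f \<ge> D (es!(k-2))"
  proof -
    fix f assume "f \<in> K"
    then obtain i where "i < k - 1" "f = es!i" using Kmem by blast
    then show "D f \<ge> D (es!(k-2))" using mono[of i "k-2"] km by simp
  qed
  define S where "S = (\<Sum>i=1..k-1. Delta E i - Delta E k)"
  have SK: "S = (\<Sum>f\<in>K. D f - Dk)"
  proof -
    have "S = (\<Sum>i=1..k-1. D (es!(i-1)) - Dk)"
      unfolding S_def
    proof (rule sum.cong[OF refl])
      fix i assume "i \<in> {1..k-1}"
      then show "Delta E i - Delta E k = D (es!(i-1)) - Dk"
      proof -
        have "i \<le> m" "1 \<le> i" using \<open>i \<in> {1..k-1}\<close> km by auto
        then show ?thesis using Dl[of i] Dl[of k] km by (simp add: Dk_def)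
      qed
    qed
    also have "\<dots> = (\<Sum>i<k-1. D (es!i) - Dk)"
      by (simp add: sum.atLeast1_atMost_eq)
    also have "\<dots> = (\<Sum>f\<in>K. D f - Dk)"
    proof -
      have inj: "inj_on (\<lambda>i. es!i) {..<k-1}" using es(1) len km by (auto simp: inj_on_def nth_eq_iff_index_eq)
      have img: "(\<lambda>i. es!i) ` {..<k-1} = K" using Kmem by auto
      show ?thesis using sum.reindex[OF inj, of "\<lambda>f. D f - Dk"] img by simp
    qed
    finally show ?thesis .
  qed
  have psik: "psi E k = 1 + (Dk + 1 + sqrt ((Dk+1)^2 + 4*S))/2"
    unfolding psi_def S_def using Dl[of k] km by (simp add: Dk_def)
  have Dk_nn: "Dk \<ge> 0" unfolding Dk_def using Dnn esin km by simp
  have psi1: "psi E 1 = D (es!0) + 2"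
  proof -
    have "D (es!0) \<ge> 0" using Dnn esin km by simp
    then show ?thesis unfolding psi_def using Dl[of 1] km by simp
  qed
  have finPsi: "finite {psi E i | i. 1 \<le> i \<and> i \<le> k - 1}" by simp
  have Minle: "Min {psi E i | i. 1 \<le> i \<and> i \<le> k - 1} \<le> psi E i" if "1 \<le> i" "i \<le> k - 1" for i
    using that by (intro Min_le[OF finPsi]) auto
  have strict: "D (es!(k-2)) > Dk"
  proof (rule ccontr)
    assume "\<not> D (es!(k-2)) > Dk"
    moreover have "D (es!(k-2)) \<ge> Dk" unfolding Dk_def using mono[of "k-2" "k-1"] km by simp
    ultimately have eq: "D (es!(k-2)) = Dk" by simp
    have d1: "Delta E (k-1) = Dk" using Dl[of "k-1"] km eq by (simp add: numeral_2_eq_2 diff_diff_add)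
    have dk: "Delta E k = Dk" using Dl[of k] km by (simp add: Dk_def)
    have "(\<Sum>i=1..k-1. Delta E i - Delta E k) = (\<Sum>i=1..k-2. Delta E i - Delta E k) + (Delta E (k-1) - Delta E k)"
    proof -
      have "k - 1 = Suc (k - 2)" using km by simp
      then show ?thesis by (simp add: sum.cl_ivl_Suc)
    qed
    then have "(\<Sum>i=1..k-1. Delta E i - Delta E k) = (\<Sum>i=1..k-1-1. Delta E i - Delta E (k-1))"
      using d1 dk by (simp add: numeral_2_eq_2 diff_diff_add)
    then have "psi E (k-1) = psi E k" unfolding psi_def using d1 dk by simp
    moreover have "q_index E < psi E (k-1)" using H Minle[of "k-1"] km by linarith
    ultimately show False using H by simp
  qed
  have S_nn: "S \<ge> 0"
    unfolding SK using Kge strict by (intro sum_nonneg) fastforce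
  define \<rho> where "\<rho> = (Dk - 1 + sqrt ((Dk+1)^2 + 4*S))/2"
  have q: "q_index E = \<rho> + 2" using H psik by (simp add: \<rho>_def field_simps)
  have sq: "sqrt ((Dk+1)^2 + 4*S) \<ge> Dk + 1"
    by (rule real_le_rsqrt) (use S_nn Dk_nn in auto)
  have rhoDk: "\<rho> \<ge> Dk" using sq by (simp add: \<rho>_def)
  have rho_eq: "(\<rho> - Dk) * (\<rho> + 1) = S"
  proof -
    define s where "s = sqrt ((Dk+1)^2 + 4*S)"
    have s2: "s^2 = (Dk+1)^2 + 4*S" using S_nn by (simp add: s_def)
    have rs: "\<rho> = (Dk - 1 + s)/2" by (simp add: \<rho>_def s_def)
    have "(\<rho> - Dk) * (\<rho> + 1) = (s^2 - (Dk+1)^2)/4"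
      unfolding rs by (simp add: field_simps power2_eq_square)
    then show ?thesis using s2 by simp
  qed
  obtain x where x: "x \<noteq> 0" "signless_laplacian E *v x = (q_index E) *\<^sub>R x"
  proof -
    have fin: "finite {c. \<exists>x. x \<noteq> 0 \<and> signless_laplacian E *v x = c *\<^sub>R x}"
      by (rule eig_finite) (rule Q_sym[OF sg])
    have ne: "{c. \<exists>x. x \<noteq> 0 \<and> signless_laplacian E *v x = c *\<^sub>R x} \<noteq> {}"
      using eig_exists[of "signless_laplacian E"] Q_sym[OF sg] by auto
    have "q_index E \<in> {c. \<exists>x. x \<noteq> 0 \<and> signless_laplacian E *v x = c *\<^sub>R x}"
      unfolding q_index_def by (rule Max_in[OF fin ne])
    then show ?thesis using that by blast
  qed
  define z where "z = zv x"
  have eig: "\<And>e. e \<in> edges E \<Longrightarrow> (\<Sum>f\<in>nbrs E e. z f) = \<rho> * z e"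
  proof -
    fix e assume "e \<in> edges E"
    then obtain u v where "E u v" "e = {u,v}" using edges_iff[OF sg] by blast
    then show "(\<Sum>f\<in>nbrs E e. z f) = \<rho> * z e" using edge_eig[OF sg x(2)] q by (simp add: z_def)
  qed
  have znz: "\<exists>e\<in>edges E. z e \<noteq> 0"
    unfolding z_def by (rule z_nonzero[OF sg x(2) x(1)]) (use q rhoDk Dk_nn in auto)
  define T where "T = \<rho> - Dk"
  define w where "w f = (if f \<in> K then (D f + T + 1)/(\<rho>+1) else 1)" for f
  have rho1: "\<rho> + 1 > 0" using rhoDk Dk_nn by simp
  have wK1: "\<And>f. f \<in> K \<Longrightarrow> w f - 1 = (D f - Dk) / (\<rho>+1)"
    using rho1 by (simp add: w_def T_def field_simps)
  have wK: "\<And>f. f \<in> K \<Longrightarrow> w f > 1"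
  proof -
    fix f assume f: "f \<in> K"
    have "D f - Dk > 0" using Kge[OF f] strict by simp
    then have "(D f - Dk) / (\<rho>+1) > 0" using rho1 by simp
    then show "w f > 1" using wK1[OF f] by simp
  qed
  have wpos: "\<And>f. w f > 0" using wK by (metis less_trans zero_less_one w_def)
  have wsum: "(\<Sum>f\<in>K. w f - 1) = T"
  proof -
    have "(\<Sum>f\<in>K. w f - 1) = (\<Sum>f\<in>K. (D f - Dk) / (\<rho>+1))" by (rule sum.cong) (simp_all add: wK1)
    also have "\<dots> = S / (\<rho>+1)" by (simp add: SK sum_divide_distrib)
    also have "\<dots> = T" using rho_eq rho1 by (simp add: T_def field_simps)
    finally show ?thesis .
  qed
  have row: "(\<Sum>f\<in>nbrs E e. w f) = D e + (\<Sum>f\<in>nbrs E e \<inter> K. w f - 1)" if e: "e \<in> edges E" for e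
  proof -
    have "(\<Sum>f\<in>nbrs E e. w f) = real (card (nbrs E e)) + (\<Sum>f\<in>nbrs E e. w f - 1)"
      by (simp add: sum_subtractf)
    also have "(\<Sum>f\<in>nbrs E e. w f - 1) = (\<Sum>f\<in>nbrs E e \<inter> K. w f - 1)"
      by (rule sum.mono_neutral_right) (auto simp: fin_nbrs w_def)
    also have "real (card (nbrs E e)) = D e" using card_nbrs'[OF sg e] by (simp add: D_def)
    finally show ?thesis .
  qed
  have finK: "finite K" by (simp add: K_def)
  have wm1: "\<And>f. f \<in> K \<Longrightarrow> w f - 1 > 0" using wK by simp
  have subK: "(\<Sum>f\<in>A. w f - 1) \<le> (\<Sum>f\<in>K. w f - 1)" if "A \<subseteq> K" for A
    by (rule sum_mono2[OF finK that]) (use wm1 in fastforce)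
  have wKeq: "\<rho> * w e = D e + (\<Sum>f\<in>K - {e}. w f - 1)" if e: "e \<in> K" for e
  proof -
    have "(\<Sum>f\<in>K - {e}. w f - 1) = T - (w e - 1)" using sum_diff1[OF finK, of "\<lambda>f. w f - 1" e] e wsum by simp
    moreover have "(\<rho> + 1) * w e = D e + T + 1" using e rho1 by (simp add: w_def)
    ultimately show ?thesis by (simp add: algebra_simps)
  qed
  have rowle: "(\<Sum>f\<in>nbrs E e. w f) \<le> \<rho> * w e" if e: "e \<in> edges E" for e
  proof (cases "e \<in> K")
    case True
    have sub': "nbrs E e \<inter> K \<subseteq> K - {e}" by (auto simp: nbrs_def)
    have "(\<Sum>f\<in>nbrs E e \<inter> K. w f - 1) \<le> (\<Sum>f\<in>K - {e}. w f - 1)"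
      by (rule sum_mono2[OF _ sub']) (simp add: finK, meson DiffD1 wm1 less_imp_le)
    then show ?thesis using row[OF e] wKeq[OF True] by simp
  next
    case False
    have "(\<Sum>f\<in>nbrs E e \<inter> K. w f - 1) \<le> T" using subK[of "nbrs E e \<inter> K"] wsum by auto
    then show ?thesis using row[OF e] notK[OF e False] False by (simp add: w_def T_def)
  qed
  have eqa: "D e = Dk \<and> K \<subseteq> nbrs E e"
    if e: "e \<in> edges E" "e \<notin> K" and eq: "(\<Sum>f\<in>nbrs E e. w f) = \<rho> * w e" for e
  proof -
    have A: "(\<Sum>f\<in>nbrs E e \<inter> K. w f - 1) \<le> T" using subK[of "nbrs E e \<inter> K"] wsum by auto
    have "D e + (\<Sum>f\<in>nbrs E e \<inter> K. w f - 1) = Dk + T"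
      using row[OF e(1)] eq e(2) by (simp add: w_def T_def)
    then have 1: "D e = Dk" and 2: "(\<Sum>f\<in>nbrs E e \<inter> K. w f - 1) = (\<Sum>f\<in>K. w f - 1)"
      using A notK[OF e] wsum by linarith+
    have "nbrs E e \<inter> K = K" by (rule sum_subset_eq[OF finK _ wm1 2]) auto
    then show ?thesis using 1 by blast
  qed
  have eqb: "K - {e} \<subseteq> nbrs E e"
    if e: "e \<in> K" and eq: "(\<Sum>f\<in>nbrs E e. w f) = \<rho> * w e" for e
  proof -
    have eE: "e \<in> edges E" using e Ksub by auto
    have sub: "nbrs E e \<inter> K \<subseteq> K - {e}" by (auto simp: nbrs_def)
    have 2: "(\<Sum>f\<in>nbrs E e \<inter> K. w f - 1) = (\<Sum>f\<in>K - {e}. w f - 1)"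
      using row[OF eE] eq wKeq[OF e] by simp
    have "nbrs E e \<inter> K = K - {e}" by (rule sum_subset_eq[OF _ sub _ 2]) (use finK wm1 in auto)
    then show ?thesis by blast
  qed
  define M where "M = Max ((\<lambda>f. \<bar>z f / w f\<bar>) ` edges E)"
  have Ene: "edges E \<noteq> {}" using Ksub cardK km by auto
  have Mge: "\<And>f. f \<in> edges E \<Longrightarrow> \<bar>z f / w f\<bar> \<le> M" unfolding M_def by simp
  obtain e0 where e0: "e0 \<in> edges E" "\<bar>z e0 / w e0\<bar> = M"
  proof -
    have "M \<in> (\<lambda>f. \<bar>z f / w f\<bar>) ` edges E" unfolding M_def using Ene by (intro Max_in) auto
    then show ?thesis using that by (auto simp del: abs_divide)
  qed
  have Mpos: "M > 0"
  proof -
    obtain e where "e \<in> edges E" "z e \<noteq> 0" using znz by blast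
    then have "\<bar>z e / w e\<bar> > 0" using wpos[of e] by simp
    then show ?thesis using Mge \<open>e \<in> edges E\<close> by force
  qed
  have rho0: "\<rho> \<ge> 0" using rhoDk Dk_nn by simp
  have tight: "(\<Sum>f\<in>nbrs E e. w f) = \<rho> * w e \<and> (\<forall>f\<in>nbrs E e. \<bar>z f / w f\<bar> = M)"
    if e: "e \<in> edges E" and te: "\<bar>z e / w e\<bar> = M" for e
  proof -
    have we: "w e > 0" by (rule wpos)
    have ze: "\<bar>z e\<bar> = M * w e" using te we by (simp add: field_simps)
    have zf: "\<bar>z f\<bar> = w f * \<bar>z f / w f\<bar>" for f
    proof -
      have "w f > 0" by (rule wpos)
      then show ?thesis by (simp add: abs_divide)
    qed
    have nbE: "\<And>f. f \<in> nbrs E e \<Longrightarrow> f \<in> edges E" by (simp add: nbrs_def)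
    have "\<rho> * \<bar>z e\<bar> = \<bar>\<Sum>f\<in>nbrs E e. z f\<bar>" using eig[OF e] rho0 by (simp add: abs_mult)
    also have "\<dots> \<le> (\<Sum>f\<in>nbrs E e. \<bar>z f\<bar>)" by (rule sum_abs)
    also have "\<dots> = (\<Sum>f\<in>nbrs E e. w f * \<bar>z f / w f\<bar>)" using zf by simp
    finally have c1: "\<rho> * \<bar>z e\<bar> \<le> (\<Sum>f\<in>nbrs E e. w f * \<bar>z f / w f\<bar>)" .
    have cf: "w f * \<bar>z f / w f\<bar> \<le> w f * M" if "f \<in> nbrs E e" for f
    proof -
      have "\<bar>z f / w f\<bar> \<le> M" using Mge nbE that by blast
      moreover have "0 \<le> w f" using wpos[of f] by simp
      ultimately show "w f * \<bar>z f / w f\<bar> \<le> w f * M" by (rule mult_left_mono)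
    qed
    have c2: "(\<Sum>f\<in>nbrs E e. w f * \<bar>z f / w f\<bar>) \<le> (\<Sum>f\<in>nbrs E e. w f * M)"
      by (rule sum_mono) (rule cf)
    have sM: "(\<Sum>f\<in>nbrs E e. w f * M) = M * (\<Sum>f\<in>nbrs E e. w f)"
      by (simp add: sum_distrib_left mult.commute)
    have c3: "(\<Sum>f\<in>nbrs E e. w f * M) \<le> M * (\<rho> * w e)"
      unfolding sM using rowle[OF e] Mpos by (intro mult_left_mono) auto
    have eq1: "(\<Sum>f\<in>nbrs E e. w f * M) = M * (\<rho> * w e)" using c1 c2 c3 ze by (simp add: algebra_simps)
    then have s1: "(\<Sum>f\<in>nbrs E e. w f) = \<rho> * w e" using Mpos unfolding sM by simp
    have eq2: "(\<Sum>f\<in>nbrs E e. w f * M - w f * \<bar>z f / w f\<bar>) = 0"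
      using c1 c2 eq1 ze by (simp add: sum_subtractf algebra_simps)
    have nn: "\<forall>f\<in>nbrs E e. 0 \<le> w f * M - w f * \<bar>z f / w f\<bar>"
      using cf by simp
    have "\<forall>f\<in>nbrs E e. w f * M - w f * \<bar>z f / w f\<bar> = 0"
      using eq2 sum_nonneg_eq_0_iff[OF fin_nbrs[of E e], of "\<lambda>f. w f * M - w f * \<bar>z f / w f\<bar>"] nn by blast
    then have "\<forall>f\<in>nbrs E e. \<bar>z f / w f\<bar> = M"
    proof (intro ballI)
      fix f assume "\<forall>f\<in>nbrs E e. w f * M - w f * \<bar>z f / w f\<bar> = 0" "f \<in> nbrs E e"
      then have "w f * (M - \<bar>z f / w f\<bar>) = 0" by (simp add: right_diff_distrib)
      then show "\<bar>z f / w f\<bar> = M" using wpos[of f] by simp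
    qed
    then show ?thesis using s1 by blast
  qed
  define tg where "tg f \<longleftrightarrow> f \<in> edges E \<and> \<bar>z f / w f\<bar> = M" for f
  have propg: "\<And>e f. tg e \<Longrightarrow> f \<in> nbrs E e \<Longrightarrow> tg f"
    using tight unfolding tg_def by (auto simp: nbrs_def)
  have Kne: "K \<noteq> {}" using cardK km by auto
  obtain i where i: "i \<in> K" "tg i"
  proof (cases "e0 \<in> K")
    case True then show ?thesis using that e0 by (auto simp: tg_def)
  next
    case False
    then have "K \<subseteq> nbrs E e0" using eqa[OF e0(1) False] tight[OF e0] by blast
    then obtain f where "f \<in> K" "f \<in> nbrs E e0" using Kne by blast
    then show ?thesis using that propg[of e0 f] e0 by (auto simp: tg_def)
  qed
  have tgK: "\<And>j. j \<in> K \<Longrightarrow> tg j"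
  proof -
    fix j assume j: "j \<in> K"
    have "K - {i} \<subseteq> nbrs E i" using eqb[OF i(1)] tight i(2) by (auto simp: tg_def)
    then show "tg j" using i j propg by (cases "j = i") auto
  qed
  have pw: "\<And>j. j \<in> K \<Longrightarrow> K - {j} \<subseteq> nbrs E j"
    using eqb tight tgK by (auto simp: tg_def)
  have cl: "\<And>h j. h \<in> edges E \<Longrightarrow> h \<notin> K \<Longrightarrow> j \<in> K \<Longrightarrow> h \<in> nbrs E j \<Longrightarrow> K \<subseteq> nbrs E h"
  proof -
    fix h j assume h: "h \<in> edges E" "h \<notin> K" "j \<in> K" "h \<in> nbrs E j"
    then have "tg h" using propg tgK by blast
    then show "K \<subseteq> nbrs E h" using eqa[OF h(1,2)] tight by (auto simp: tg_def)
  qed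
  have closed: "\<And>j. j \<in> K \<Longrightarrow> nbrs E j \<subseteq> K"
  proof (rule ccontr)
    fix j assume j: "j \<in> K" and "\<not> nbrs E j \<subseteq> K"
    then obtain g where g: "g \<in> nbrs E j" "g \<notin> K" by blast
    then have gE: "g \<in> edges E" by (simp add: nbrs_def)
    have "tg g" using propg tgK j g by blast
    then have gD: "D g = Dk" "K \<subseteq> nbrs E g" using eqa[OF gE g(2)] tight by (auto simp: tg_def)
    have c3: "3 \<le> card K" using cardK km by simp
    have "\<exists>j\<in>K. edge_val E j \<le> edge_val E g"
    proof (rule comb[OF sg Ksub c3 gE g(2) gD(2)])
      show "\<And>j. j \<in> K \<Longrightarrow> K - {j} \<subseteq> nbrs E j" by (rule pw)
      show "\<And>h j. h \<in> edges E \<Longrightarrow> h \<notin> K \<Longrightarrow> j \<in> K \<Longrightarrow> h \<in> nbrs E j \<Longrightarrow> K \<subseteq> nbrs E h" by (rule cl)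
    qed
    then obtain j' where "j' \<in> K" "edge_val E j' \<le> edge_val E g" by blast
    then have "D j' \<le> Dk" using gD by (simp add: D_def)
    then show False using Kge[OF \<open>j' \<in> K\<close>] strict by simp
  qed
  have nbK: "nbrs E j = K - {j}" if j: "j \<in> K" for j
  proof (rule equalityI)
    have "j \<notin> nbrs E j" by (simp add: nbrs_def)
    then show "nbrs E j \<subseteq> K - {j}" using closed[OF j] by blast
    show "K - {j} \<subseteq> nbrs E j" by (rule pw[OF j])
  qed
  have DK: "\<And>j. j \<in> K \<Longrightarrow> D j = real k - 2"
  proof -
    fix j assume j: "j \<in> K"
    have "D j = real (card (nbrs E j))" using card_nbrs'[OF sg] j Ksub by (auto simp: D_def)
    also have "\<dots> = real k - 2" using nbK[OF j] j cardK km by simp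
    finally show "D j = real k - 2" .
  qed
  define w0 where "w0 = (real k - 2 + T + 1)/(\<rho>+1)"
  have wK0: "\<And>j. j \<in> K \<Longrightarrow> w j = w0" using DK by (simp add: w_def w0_def)
  have "(\<Sum>f\<in>nbrs E i. w f) = \<rho> * w i" using tight i(2) by (auto simp: tg_def)
  moreover have "(\<Sum>f\<in>nbrs E i. w f) = (real k - 2) * w0"
    using nbK[OF i(1)] wK0 cardK km i(1) by simp
  ultimately have "(real k - 2) * w0 = \<rho> * w0" using wK0[OF i(1)] by simp
  then have rk: "\<rho> = real k - 2" using wpos[of i] wK0[OF i(1)] by simp
  have "0 < k - 1" using km by simp
  then have "es!0 \<in> K" using Kmem by blast
  then have "psi E 1 = q_index E" using psi1 DK rk q by simp
  moreover have "q_index E < psi E 1" using H Minle[of 1] km by linarith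
  ultimately show False by simp
qed


end
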